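(* Consider the multi-level, multi-user caching problem described in the context, with $K$ caches, $L$ levels, and parameters $\{N_i,U_i\}_{i=1}^L$. Let $b$ be a positive integer, $t\in\{1,\dots,K\}$, and for every level $i$ let $s_i\in\{1,\dots,\lfloor K/(2t)\rfloor\}$. Then for every memory $M\ge0$, \[ R^\ast(M)\ge\sum_{i=1}^L\min\Big\{s_itU_i,\;\frac{N_i}{s_ib}\Big\}-\frac tb\,M. \]
   Context: Multi-level, multi-user caching problem. A server holds $\sum_{i=1}^L N_i$ files, each of $F$ bits, partitioned into $L$ popularity levels, level $i$ consisting of $N_i$ files. There are $K$ caches, each able to store $MF$ bits. In a placement phase (before requests are known) arbitrary functions of the files are stored in the caches. Then, for each level $i$ and each cache, exactly $U_i$ users are connected to that cache and each of them requests an arbitrary file of level $i$. The server then sends one broadcast message of $RF$ bits heard by all users, and each user must recover its requested file from the broadcast and the contents of its cache. A pair $(R,M)$ is achievable if there is a placement-and-delivery strategy with caches of memory $M$ that, for every admissible demand, uses a broadcast of rate at most $R$ satisfying all requests (with vanishing error probability as $F\to\infty$). The optimal rate is $R^\ast(M)=\inf\{R:(R,M)\text{ achievable}\}$. Standing assumptions of the setup: $N_i\ge KU_i$ for all $i$, and, with $\beta=1/80$, for distinct levels $i,j$ with $U_i/N_i\ge U_j/N_j$, $\frac{U_i/N_i}{U_j/N_j}\ge1/\beta^2$. *)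

theory Defs
  imports Complex_Main
begin

text \<open>Levels are indexed by 1..L, caches by 0..<K, users of level i at a cache by 0..<U i.
  File n of level i (n < N i) is indexed by the pair (i, n).  A library assigns to every
  file a bit string (bool list) of length F; libraries are uniformly distributed, so error
  probabilities are ratios of cardinalities.\<close>

type_synonym library = "nat \<times> nat \<Rightarrow> bool list"
type_synonym demand = "nat \<Rightarrow> nat \<Rightarrow> nat \<Rightarrow> nat"
  \<comment> \<open>d i k u = index (within level i) of the file requested by user u of level i at cache k\<close>

definition files :: "nat \<Rightarrow> (nat \<Rightarrow> nat) \<Rightarrow> (nat \<times> nat) set" where
  "files L N = {(i, n). i \<in> {1..L} \<and> n < N i}"

definition libraries :: "nat \<Rightarrow> (nat \<Rightarrow> nat) \<Rightarrow> nat \<Rightarrow> library set" where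
  "libraries L N F = {lib. (\<forall>x\<in>files L N. length (lib x) = F) \<and> (\<forall>x. x \<notin> files L N \<longrightarrow> lib x = [])}"

definition admissible_demand :: "nat \<Rightarrow> nat \<Rightarrow> (nat \<Rightarrow> nat) \<Rightarrow> (nat \<Rightarrow> nat) \<Rightarrow> demand \<Rightarrow> bool" where
  "admissible_demand K L N U d = (\<forall>i\<in>{1..L}. \<forall>k<K. \<forall>u<U i. d i k u < N i)"

definition decoding_error ::
  "nat \<Rightarrow> nat \<Rightarrow> (nat \<Rightarrow> nat) \<Rightarrow> library \<Rightarrow> (nat \<Rightarrow> library \<Rightarrow> bool list)
   \<Rightarrow> (demand \<Rightarrow> library \<Rightarrow> bool list)
   \<Rightarrow> (demand \<Rightarrow> nat \<Rightarrow> nat \<Rightarrow> nat \<Rightarrow> bool list \<Rightarrow> bool list \<Rightarrow> bool list) \<Rightarrow> demand \<Rightarrow> bool" where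
  "decoding_error K L U lib \<phi> \<psi> \<mu> d =
     (\<exists>i\<in>{1..L}. \<exists>k<K. \<exists>u<U i. \<mu> d i k u (\<psi> d lib) (\<phi> k lib) \<noteq> lib (i, d i k u))"

definition error_prob ::
  "nat \<Rightarrow> nat \<Rightarrow> (nat \<Rightarrow> nat) \<Rightarrow> (nat \<Rightarrow> nat) \<Rightarrow> nat \<Rightarrow> (nat \<Rightarrow> library \<Rightarrow> bool list)
   \<Rightarrow> (demand \<Rightarrow> library \<Rightarrow> bool list)
   \<Rightarrow> (demand \<Rightarrow> nat \<Rightarrow> nat \<Rightarrow> nat \<Rightarrow> bool list \<Rightarrow> bool list \<Rightarrow> bool list) \<Rightarrow> demand \<Rightarrow> real" where
  "error_prob K L N U F \<phi> \<psi> \<mu> d =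
     real (card {lib \<in> libraries L N F. decoding_error K L U lib \<phi> \<psi> \<mu> d})
     / real (card (libraries L N F))"

text \<open>A scheme with file size F, memory M, rate R and (worst-case over demands) error
  probability at most eps: placement \<phi> (cache contents, functions of the files only),
  delivery \<psi> (broadcast, function of demand and files), decoders \<mu> (each user decodes
  from the broadcast and its own cache; the decoder may depend on the demand).\<close>

definition caching_scheme ::
  "nat \<Rightarrow> nat \<Rightarrow> (nat \<Rightarrow> nat) \<Rightarrow> (nat \<Rightarrow> nat) \<Rightarrow> nat \<Rightarrow> real \<Rightarrow> real
   \<Rightarrow> (nat \<Rightarrow> library \<Rightarrow> bool list)
   \<Rightarrow> (demand \<Rightarrow> library \<Rightarrow> bool list)
   \<Rightarrow> (demand \<Rightarrow> nat \<Rightarrow> nat \<Rightarrow> nat \<Rightarrow> bool list \<Rightarrow> bool list \<Rightarrow> bool list) \<Rightarrow> real \<Rightarrow> bool" where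
  "caching_scheme K L N U F M R \<phi> \<psi> \<mu> eps =
     ((\<forall>k<K. \<forall>lib\<in>libraries L N F. int (length (\<phi> k lib)) \<le> \<lfloor>M * real F\<rfloor>) \<and>
      (\<forall>d. admissible_demand K L N U d \<longrightarrow>
         (\<forall>lib\<in>libraries L N F. int (length (\<psi> d lib)) \<le> \<lfloor>R * real F\<rfloor>)) \<and>
      (\<forall>d. admissible_demand K L N U d \<longrightarrow> error_prob K L N U F \<phi> \<psi> \<mu> d \<le> eps))"

definition achievable :: "nat \<Rightarrow> nat \<Rightarrow> (nat \<Rightarrow> nat) \<Rightarrow> (nat \<Rightarrow> nat) \<Rightarrow> real \<Rightarrow> real \<Rightarrow> bool" where
  "achievable K L N U R M =
     (\<forall>eps>0. \<exists>F0. \<forall>F\<ge>F0. \<exists>\<phi> \<psi> \<mu>. caching_scheme K L N U F M R \<phi> \<psi> \<mu> eps)"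

definition opt_rate :: "nat \<Rightarrow> nat \<Rightarrow> (nat \<Rightarrow> nat) \<Rightarrow> (nat \<Rightarrow> nat) \<Rightarrow> real \<Rightarrow> real" where
  "opt_rate K L N U M = Inf {R. achievable K L N U R M}"

end

theory Submission
  imports Defs "HOL-Library.FuncSet"
begin


definition cnt :: "'l set \<Rightarrow> ('l \<Rightarrow> 'a) \<Rightarrow> 'l \<Rightarrow> nat" where
  "cnt G X g = card {g'\<in>G. X g' = X g}"

definition ent :: "'l set \<Rightarrow> ('l \<Rightarrow> 'a) \<Rightarrow> real" where
  "ent G X = (\<Sum>g\<in>G. log 2 (real (card G) / real (cnt G X g))) / real (card G)"

lemma cnt_pos: "finite G \<Longrightarrow> g \<in> G \<Longrightarrow> 1 \<le> cnt G X g"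
proof -
  assume a: "finite G" "g \<in> G"
  have "g \<in> {g'\<in>G. X g' = X g}" using a by simp
  then have "0 < card {g'\<in>G. X g' = X g}" using a by (auto simp: card_gt_0_iff)
  then show ?thesis unfolding cnt_def by simp
qed

lemma cnt_le: "finite G \<Longrightarrow> cnt G X g \<le> card G"
  unfolding cnt_def by (rule card_mono) auto

lemma ent_nonneg: assumes "finite G" shows "0 \<le> ent G X"
proof -
  have "0 \<le> log 2 (real (card G) / real (cnt G X g))" if "g \<in> G" for g
  proof -
    have a: "1 \<le> cnt G X g" using cnt_pos[OF assms that] .
    have b: "cnt G X g \<le> card G" using cnt_le[OF assms] .
    have "1 \<le> real (card G) / real (cnt G X g)" using a b by simp
    then show ?thesis by simp
  qed
  then have "0 \<le> (\<Sum>g\<in>G. log 2 (real (card G) / real (cnt G X g)))" by (rule sum_nonneg)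
  then show ?thesis unfolding ent_def by simp
qed

lemma ent_mono:
  assumes fin: "finite G" and det: "\<forall>g\<in>G. \<forall>g'\<in>G. Y g = Y g' \<longrightarrow> X g = X g'"
  shows "ent G X \<le> ent G Y"
proof -
  have "log 2 (real (card G) / real (cnt G X g)) \<le> log 2 (real (card G) / real (cnt G Y g))"
    if "g \<in> G" for g
  proof -
    have sub: "cnt G Y g \<le> cnt G X g" unfolding cnt_def
    proof (rule card_mono)
      show "finite {g' \<in> G. X g' = X g}" using fin by simp
      show "{g' \<in> G. Y g' = Y g} \<subseteq> {g' \<in> G. X g' = X g}"
        using det that by blast
    qed
    have p: "1 \<le> cnt G Y g" using cnt_pos[OF fin that] .
    have cg: "0 < card G" using fin that card_gt_0_iff by blast
    have le: "real (card G) / real (cnt G X g) \<le> real (card G) / real (cnt G Y g)"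
      using sub p cg by (intro divide_left_mono) auto
    have pos: "0 < real (card G) / real (cnt G Y g)" using p cg by simp
    have pos2: "0 < real (card G) / real (cnt G X g)" using p sub cg by simp
    show ?thesis using le pos pos2 by simp
  qed
  then have "(\<Sum>g\<in>G. log 2 (real (card G) / real (cnt G X g))) \<le> (\<Sum>g\<in>G. log 2 (real (card G) / real (cnt G Y g)))"
    by (rule sum_mono)
  then show ?thesis unfolding ent_def by (rule divide_right_mono) simp
qed

lemma ent_cong:
  assumes fin: "finite G" and "\<forall>g\<in>G. \<forall>g'\<in>G. Y g = Y g' \<longleftrightarrow> X g = X g'"
  shows "ent G X = ent G Y"
  using ent_mono[OF fin, of Y X] ent_mono[OF fin, of X Y] assms by (meson order_antisym)

lemma ent_const: "ent G (\<lambda>_. c) = 0"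
  unfolding ent_def cnt_def by simp

lemma ent_inj: assumes "finite G" "inj_on X G" shows "ent G X = log 2 (real (card G))"
proof -
  have "cnt G X g = 1" if "g \<in> G" for g
  proof -
    have "{g'\<in>G. X g' = X g} = {g}" using assms(2) that by (auto dest: inj_onD)
    then show ?thesis unfolding cnt_def by simp
  qed
  then show ?thesis unfolding ent_def
    by (cases "card G = 0") (auto simp: card_eq_0_iff log_def)
qed

lemma sum_inv_cnt: assumes "finite G"
  shows "(\<Sum>g\<in>G. 1 / real (cnt G X g)) = real (card (X ` G))"
proof -
  have "(\<Sum>g\<in>G. 1 / real (cnt G X g)) = (\<Sum>v\<in>X ` G. \<Sum>g\<in>{g\<in>G. X g = v}. 1 / real (cnt G X g))"
    using assms by (rule sum.image_gen)
  also have "\<dots> = (\<Sum>v\<in>X ` G. 1)"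
  proof (rule sum.cong[OF refl])
    fix v assume v: "v \<in> X ` G"
    have "(\<Sum>g\<in>{g\<in>G. X g = v}. 1 / real (cnt G X g)) = (\<Sum>g\<in>{g\<in>G. X g = v}. 1 / real (card {g\<in>G. X g = v}))"
      by (rule sum.cong[OF refl]) (simp add: cnt_def)
    also have "\<dots> = 1" using v assms by (auto simp: card_gt_0_iff)
    finally show "(\<Sum>g\<in>{g\<in>G. X g = v}. 1 / real (cnt G X g)) = 1" .
  qed
  finally show ?thesis by simp
qed

lemma log2_le: "0 < x \<Longrightarrow> log 2 x \<le> (x - 1) / ln 2"
  unfolding log_def by (intro divide_right_mono ln_le_minus_one) auto

lemma ent_le_card: assumes fin: "finite G" and ne: "G \<noteq> {}"
  shows "ent G X \<le> log 2 (real (card (X ` G)))"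
proof -
  define V where "V = real (card (X ` G))"
  define n where "n = real (card G)"
  have Vpos: "0 < V" unfolding V_def using fin ne by (simp add: card_gt_0_iff)
  have npos: "0 < n" unfolding n_def using fin ne by (simp add: card_gt_0_iff)
  have cpos: "0 < real (cnt G X g)" if "g \<in> G" for g
  proof -
    have "1 \<le> cnt G X g" by (rule cnt_pos[OF fin that])
    then show ?thesis by simp
  qed
  have "log 2 (n / real (cnt G X g)) - log 2 V \<le> (n / (real (cnt G X g) * V) - 1) / ln 2"
    if g: "g \<in> G" for g
  proof -
    have "log 2 (n / real (cnt G X g)) - log 2 V = log 2 (n / (real (cnt G X g) * V))"
      using cpos[OF g] Vpos npos by (simp add: log_divide log_mult)
    also have "\<dots> \<le> (n / (real (cnt G X g) * V) - 1) / ln 2"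
      using cpos[OF g] Vpos npos by (intro log2_le) simp
    finally show ?thesis .
  qed
  then have "(\<Sum>g\<in>G. log 2 (n / real (cnt G X g)) - log 2 V) \<le> (\<Sum>g\<in>G. (n / (real (cnt G X g) * V) - 1) / ln 2)"
    by (rule sum_mono)
  also have "\<dots> = ((n / V) * (\<Sum>g\<in>G. 1 / real (cnt G X g)) - n) / ln 2"
    by (simp add: sum_divide_distrib[symmetric] sum_subtractf sum_distrib_left n_def mult.commute)
  also have "\<dots> = 0" using sum_inv_cnt[OF fin, of X] Vpos unfolding V_def by simp
  finally have "(\<Sum>g\<in>G. log 2 (n / real (cnt G X g))) \<le> n * log 2 V"
    by (simp add: sum_subtractf n_def)
  then show ?thesis unfolding ent_def n_def[symmetric] V_def[symmetric] using npos
    by (simp add: divide_le_eq mult.commute)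
qed

lemma real_card_filter: "finite A \<Longrightarrow> real (card {x\<in>A. P x}) = (\<Sum>x\<in>A. if P x then 1 else 0)"
  by (simp add: sum.inter_filter[symmetric])

lemma submod_key:
  fixes X :: "'l \<Rightarrow> 'a" and Y :: "'l \<Rightarrow> 'b" and Z :: "'l \<Rightarrow> 'c"
  assumes fin: "finite G"
  defines "cXZ \<equiv> \<lambda>g. real (card {g'\<in>G. X g' = X g \<and> Z g' = Z g})"
    and "cYZ \<equiv> \<lambda>g. real (card {g'\<in>G. Y g' = Y g \<and> Z g' = Z g})"
    and "cXYZ \<equiv> \<lambda>g. real (card {g'\<in>G. X g' = X g \<and> Y g' = Y g \<and> Z g' = Z g})"
    and "cZ \<equiv> \<lambda>g. real (card {g'\<in>G. Z g' = Z g})"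
  shows "(\<Sum>g\<in>G. cXZ g * cYZ g / (cXYZ g * cZ g)) \<le> real (card G)"
proof -
  define f where "f g = 1 / (cXYZ g * cZ g)" for g
  define cond where "cond g g1 g2 \<longleftrightarrow> X g1 = X g \<and> Z g1 = Z g \<and> Y g2 = Y g \<and> Z g2 = Z g" for g g1 g2
  have step1: "cXZ g * cYZ g / (cXYZ g * cZ g) = (\<Sum>g1\<in>G. \<Sum>g2\<in>G. if cond g g1 g2 then f g else 0)" for g
  proof -
    have "cXZ g * cYZ g = (\<Sum>g1\<in>G. if X g1 = X g \<and> Z g1 = Z g then 1 else 0) * (\<Sum>g2\<in>G. if Y g2 = Y g \<and> Z g2 = Z g then 1 else 0)"
      unfolding cXZ_def cYZ_def by (simp add: real_card_filter[OF fin])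
    also have "\<dots> = (\<Sum>g1\<in>G. \<Sum>g2\<in>G. if cond g g1 g2 then 1 else 0)"
      unfolding cond_def sum_product by (intro sum.cong refl) auto
    finally have eq: "cXZ g * cYZ g = (\<Sum>g1\<in>G. \<Sum>g2\<in>G. if cond g g1 g2 then 1 else 0)" .
    then have "cXZ g * cYZ g / (cXYZ g * cZ g) = (\<Sum>g1\<in>G. \<Sum>g2\<in>G. (if cond g g1 g2 then 1 else 0) / (cXYZ g * cZ g))"
      by (simp add: sum_divide_distrib)
    also have "\<dots> = (\<Sum>g1\<in>G. \<Sum>g2\<in>G. if cond g g1 g2 then f g else 0)"
      unfolding f_def by (intro sum.cong refl) simp
    finally show ?thesis .
  qed
  have "(\<Sum>g\<in>G. cXZ g * cYZ g / (cXYZ g * cZ g)) = (\<Sum>g\<in>G. \<Sum>g1\<in>G. \<Sum>g2\<in>G. if cond g g1 g2 then f g else 0)"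
    by (simp add: step1)
  also have "\<dots> = (\<Sum>g1\<in>G. \<Sum>g\<in>G. \<Sum>g2\<in>G. if cond g g1 g2 then f g else 0)"
    by (rule sum.swap)
  also have "\<dots> = (\<Sum>g1\<in>G. \<Sum>g2\<in>G. \<Sum>g\<in>G. if cond g g1 g2 then f g else 0)"
    by (intro sum.cong refl sum.swap)
  also have "\<dots> \<le> (\<Sum>g1\<in>G. \<Sum>g2\<in>G. if Z g2 = Z g1 then 1 / cZ g1 else 0)"
  proof (intro sum_mono)
    fix g1 g2 assume g1: "g1 \<in> G" and g2: "g2 \<in> G"
    show "(\<Sum>g\<in>G. if cond g g1 g2 then f g else 0) \<le> (if Z g2 = Z g1 then 1 / cZ g1 else 0)"
    proof (cases "Z g2 = Z g1")
      case False
      then have "\<not> cond g g1 g2" for g unfolding cond_def by auto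
      then show ?thesis using False by simp
    next
      case True
      define E where "E = {g\<in>G. cond g g1 g2}"
      have sumE: "(\<Sum>g\<in>G. if cond g g1 g2 then f g else 0) = (\<Sum>g\<in>E. f g)"
        unfolding E_def using fin by (simp add: sum.inter_filter)
      have fE: "f g = 1 / (real (card E) * cZ g1)" if "g \<in> E" for g
      proof -
        have c: "cond g g1 g2" "g \<in> G" using that unfolding E_def by auto
        have "{g'\<in>G. X g' = X g \<and> Y g' = Y g \<and> Z g' = Z g} = E"
          using c True unfolding E_def cond_def by auto
        moreover have "{g'\<in>G. Z g' = Z g} = {g'\<in>G. Z g' = Z g1}"
          using c unfolding cond_def by auto
        ultimately show ?thesis unfolding f_def cXYZ_def cZ_def by simp
      qed
      have "(\<Sum>g\<in>E. f g) = real (card E) * (1 / (real (card E) * cZ g1))"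
        using fE by simp
      also have "\<dots> \<le> 1 / cZ g1"
      proof (cases "card E = 0")
        case True then show ?thesis
          using g1 fin unfolding cZ_def by (simp add: card_gt_0_iff)
      next
        case False then show ?thesis by simp
      qed
      finally show ?thesis using sumE True by simp
    qed
  qed
  also have "\<dots> = (\<Sum>g1\<in>G. 1)"
  proof (rule sum.cong[OF refl])
    fix g1 assume g1: "g1 \<in> G"
    have "(\<Sum>g2\<in>G. if Z g2 = Z g1 then 1 / cZ g1 else 0) = cZ g1 * (1 / cZ g1)"
      unfolding cZ_def using fin by (simp add: sum.If_cases[OF fin] Int_def)
    also have "\<dots> = 1" unfolding cZ_def using g1 fin by (auto simp: card_gt_0_iff)
    finally show "(\<Sum>g2\<in>G. if Z g2 = Z g1 then 1 / cZ g1 else 0) = 1" .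
  qed
  finally show ?thesis by simp
qed

lemma ent_submod:
  fixes X :: "'l \<Rightarrow> 'a" and Y :: "'l \<Rightarrow> 'b" and Z :: "'l \<Rightarrow> 'c"
  assumes fin: "finite G"
  shows "ent G (\<lambda>g. (X g, Y g, Z g)) + ent G Z \<le> ent G (\<lambda>g. (X g, Z g)) + ent G (\<lambda>g. (Y g, Z g))"
proof (cases "G = {}")
  case True then show ?thesis by (simp add: ent_def)
next
  case ne: False
  define n where "n = real (card G)"
  have npos: "0 < n" unfolding n_def using fin ne by (simp add: card_gt_0_iff)
  define a where "a g = real (card {g'\<in>G. X g' = X g \<and> Y g' = Y g \<and> Z g' = Z g})" for g
  define b where "b g = real (card {g'\<in>G. X g' = X g \<and> Z g' = Z g})" for g
  define c where "c g = real (card {g'\<in>G. Y g' = Y g \<and> Z g' = Z g})" for g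
  define d where "d g = real (card {g'\<in>G. Z g' = Z g})" for g
  have ca: "real (cnt G (\<lambda>g. (X g, Y g, Z g)) g) = a g" for g unfolding cnt_def a_def by simp
  have cb: "real (cnt G (\<lambda>g. (X g, Z g)) g) = b g" for g unfolding cnt_def b_def by simp
  have cc: "real (cnt G (\<lambda>g. (Y g, Z g)) g) = c g" for g unfolding cnt_def c_def by simp
  have cd: "real (cnt G Z g) = d g" for g unfolding cnt_def d_def by simp
  have pos: "0 < a g" "0 < b g" "0 < c g" "0 < d g" if "g \<in> G" for g
  proof -
    have "1 \<le> cnt G (\<lambda>g. (X g, Y g, Z g)) g" "1 \<le> cnt G (\<lambda>g. (X g, Z g)) g"
      "1 \<le> cnt G (\<lambda>g. (Y g, Z g)) g" "1 \<le> cnt G Z g"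
      using cnt_pos[OF fin that] by auto
    then show "0 < a g" "0 < b g" "0 < c g" "0 < d g"
      using ca[of g] cb[of g] cc[of g] cd[of g] by linarith+
  qed
  have pt: "log 2 (n / a g) + log 2 (n / d g) - log 2 (n / b g) - log 2 (n / c g)
        \<le> (b g * c g / (a g * d g) - 1) / ln 2" if g: "g \<in> G" for g
  proof -
    note p = pos[OF g]
    have "log 2 (n / a g) + log 2 (n / d g) - log 2 (n / b g) - log 2 (n / c g)
        = log 2 (b g * c g / (a g * d g))"
      using p npos by (simp add: log_divide log_mult)
    also have "\<dots> \<le> (b g * c g / (a g * d g) - 1) / ln 2"
      using p by (intro log2_le) simp
    finally show ?thesis .
  qed
  have "(\<Sum>g\<in>G. log 2 (n / a g) + log 2 (n / d g) - log 2 (n / b g) - log 2 (n / c g))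
      \<le> (\<Sum>g\<in>G. (b g * c g / (a g * d g) - 1) / ln 2)"
    using pt by (rule sum_mono)
  also have "\<dots> = ((\<Sum>g\<in>G. b g * c g / (a g * d g)) - n) / ln 2"
    by (simp add: sum_divide_distrib[symmetric] sum_subtractf n_def)
  also have "\<dots> \<le> 0"
  proof -
    have "(\<Sum>g\<in>G. b g * c g / (a g * d g)) \<le> n"
      unfolding a_def b_def c_def d_def n_def by (rule submod_key[OF fin])
    then show ?thesis by (simp add: divide_nonpos_pos)
  qed
  finally have S: "(\<Sum>g\<in>G. log 2 (n / a g)) + (\<Sum>g\<in>G. log 2 (n / d g))
      \<le> (\<Sum>g\<in>G. log 2 (n / b g)) + (\<Sum>g\<in>G. log 2 (n / c g))"
    by (simp add: sum.distrib sum_subtractf)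
  have e: "ent G (\<lambda>g. (X g, Y g, Z g)) = (\<Sum>g\<in>G. log 2 (n / a g)) / n"
    "ent G Z = (\<Sum>g\<in>G. log 2 (n / d g)) / n"
    "ent G (\<lambda>g. (X g, Z g)) = (\<Sum>g\<in>G. log 2 (n / b g)) / n"
    "ent G (\<lambda>g. (Y g, Z g)) = (\<Sum>g\<in>G. log 2 (n / c g)) / n"
    unfolding ent_def n_def[symmetric] ca cb cc cd by simp_all
  show ?thesis unfolding e using S npos by (simp add: add_divide_distrib[symmetric] divide_right_mono)
qed



lemma concave_seq:
  fixes a :: "nat \<Rightarrow> real"
  assumes a0: "a 0 = 0"
    and cv: "\<And>k. 1 \<le> k \<Longrightarrow> k + 1 \<le> n \<Longrightarrow> a (k + 1) + a (k - 1) \<le> 2 * a k"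
  shows "1 \<le> k \<Longrightarrow> k + 1 \<le> n \<Longrightarrow> real k * a (k + 1) \<le> real (k + 1) * a k"
proof (induction k rule: nat_induct_at_least)
  case base
  then show ?case using cv[of 1] a0 by simp
next
  case (Suc k)
  have ih: "real k * a (k + 1) \<le> real (k + 1) * a k" using Suc by simp
  have c: "a (k + 2) + a k \<le> 2 * a (k + 1)" using cv[of "k+1"] Suc by simp
  have kp: "0 < real (k+1)" by simp
  have "real (k+1) * a (k + 2) \<le> real (k+1) * (2 * a (k + 1) - a k)"
    using c kp by (intro mult_left_mono) auto
  also have "\<dots> = 2 * real (k+1) * a (k+1) - real (k+1) * a k" by (simp add: algebra_simps)
  also have "\<dots> \<le> 2 * real (k+1) * a (k+1) - real k * a (k+1)" using ih by simp
  also have "\<dots> = real (k + 2) * a (k + 1)" by (simp add: algebra_simps)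
  finally show ?case by (simp add: add.commute)
qed

lemma concave_seq_ratio:
  fixes a :: "nat \<Rightarrow> real"
  assumes a0: "a 0 = 0"
    and cv: "\<And>k. 1 \<le> k \<Longrightarrow> k + 1 \<le> n \<Longrightarrow> a (k + 1) + a (k - 1) \<le> 2 * a k"
    and k: "1 \<le> k" and kk: "k \<le> k'" and kn: "k' \<le> n"
  shows "a k' / real k' \<le> a k / real k"
  using kk kn
proof (induction k' rule: dec_induct)
  case base then show ?case by simp
next
  case (step m)
  have m1: "1 \<le> m" using k step by simp
  have "real m * a (m + 1) \<le> real (m + 1) * a m"
    using concave_seq[of a n m] a0 cv m1 step by simp
  then have "a (Suc m) / real (Suc m) \<le> a m / real m"
    using m1 by (simp add: divide_simps mult.commute)
  then show ?case using step by simp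
qed

definition win :: "nat \<Rightarrow> nat \<Rightarrow> nat \<Rightarrow> nat set" where
  "win n w k = (\<lambda>x. (w + x) mod n) ` {..<k}"

lemma win_0[simp]: "win n w 0 = {}" unfolding win_def by simp

lemma win_union: "1 \<le> k \<Longrightarrow> win n w k \<union> win n (Suc w) k = win n w (Suc k)"
  unfolding win_def
proof (intro equalityI subsetI)
  fix y assume "1 \<le> k" and y: "y \<in> (\<lambda>x. (w + x) mod n) ` {..<k} \<union> (\<lambda>x. (Suc w + x) mod n) ` {..<k}"
  then show "y \<in> (\<lambda>x. (w + x) mod n) ` {..<Suc k}"
  proof (elim UnE)
    assume "y \<in> (\<lambda>x. (w + x) mod n) ` {..<k}"
    then obtain x where "x < k" "y = (w + x) mod n" by auto
    then show ?thesis by (intro image_eqI[where x=x]) auto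
  next
    assume "y \<in> (\<lambda>x. (Suc w + x) mod n) ` {..<k}"
    then obtain x where "x < k" "y = (Suc w + x) mod n" by auto
    then show ?thesis by (intro image_eqI[where x="Suc x"]) auto
  qed
next
  fix y assume k: "1 \<le> k" and y: "y \<in> (\<lambda>x. (w + x) mod n) ` {..<Suc k}"
  then obtain x where x: "x < Suc k" "y = (w + x) mod n" by auto
  show "y \<in> (\<lambda>x. (w + x) mod n) ` {..<k} \<union> (\<lambda>x. (Suc w + x) mod n) ` {..<k}"
  proof (cases x)
    case 0 then show ?thesis using x k by (intro UnI1 image_eqI[where x=0]) auto
  next
    case (Suc x') then show ?thesis using x by (auto intro!: image_eqI[where x=x'])
  qed
qed

lemma win_inter: assumes k1: "1 \<le> k" and kn: "k + 1 \<le> n"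
  shows "win n w k \<inter> win n (Suc w) k = win n (Suc w) (k - 1)"
  unfolding win_def
proof (intro equalityI subsetI)
  fix y assume "y \<in> (\<lambda>x. (w + x) mod n) ` {..<k} \<inter> (\<lambda>x. (Suc w + x) mod n) ` {..<k}"
  then obtain x x' where x: "x < k" "y = (w + x) mod n" and x': "x' < k" "y = (Suc w + x') mod n"
    by blast
  show "y \<in> (\<lambda>x. (Suc w + x) mod n) ` {..<k - 1}"
  proof (cases x)
    case 0
    then have e: "(w + Suc x') mod n = (w + 0) mod n" using x x' by simp
    have "Suc x' mod n = 0 mod n"
    proof -
      define r where "r = w mod n"
      have np: "0 < n" using kn k1 by simp
      have rn: "r < n" unfolding r_def using np by simp
      have xn: "Suc x' < n" using x' kn by simp
      have "(r + Suc x') mod n = (w + Suc x') mod n" unfolding r_def by (rule mod_add_left_eq)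
      also have "\<dots> = r" using e unfolding r_def by simp
      finally have "(r + Suc x') mod n = r" .
      moreover have "(r + Suc x') mod n \<noteq> r"
      proof (cases "r + Suc x' < n")
        case True then show ?thesis by simp
      next
        case False
        then have "(r + Suc x') mod n = r + Suc x' - n" using rn xn by (simp add: le_mod_geq)
        then show ?thesis using xn False by linarith
      qed
      ultimately show ?thesis by simp
    qed
    moreover have "Suc x' < n" using x' kn by simp
    ultimately show ?thesis by simp
  next
    case (Suc x'')
    then have "x'' < k - 1" "y = (Suc w + x'') mod n" using x by auto
    then show ?thesis by (intro image_eqI[where x=x'']) auto
  qed
next
  fix y assume "y \<in> (\<lambda>x. (Suc w + x) mod n) ` {..<k - 1}"
  then obtain x where x: "x < k - 1" "y = (Suc w + x) mod n" by blast
  have a: "y \<in> (\<lambda>x. (w + x) mod n) ` {..<k}" using x by (intro image_eqI[where x="Suc x"]) auto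
  have b: "y \<in> (\<lambda>x. (Suc w + x) mod n) ` {..<k}" using x by (intro image_eqI[where x="x"]) auto
  show "y \<in> (\<lambda>x. (w + x) mod n) ` {..<k} \<inter> (\<lambda>x. (Suc w + x) mod n) ` {..<k}"
    using a b by blast
qed

lemma win_n: "win n n k = win n 0 k"
  unfolding win_def by simp

lemma sum_win_shift:
  fixes f :: "nat set \<Rightarrow> real"
  shows "(\<Sum>w<n. f (win n (Suc w) k)) = (\<Sum>w<n. f (win n w k))"
proof -
  have "(\<Sum>w<Suc n. f (win n w k)) = f (win n 0 k) + (\<Sum>w<n. f (win n (Suc w) k))"
    by (rule sum.lessThan_Suc_shift)
  moreover have "(\<Sum>w<Suc n. f (win n w k)) = (\<Sum>w<n. f (win n w k)) + f (win n n k)"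
    by simp
  ultimately show ?thesis using win_n[of n k] by simp
qed

lemma window_ratio:
  fixes h :: "nat set \<Rightarrow> real"
  assumes submod: "\<And>A B. h (A \<union> B) + h (A \<inter> B) \<le> h A + h B"
    and h0: "h {} = 0"
    and k: "1 \<le> k" and kk: "k \<le> k'" and kn: "k' \<le> n"
  shows "(\<Sum>w<n. h (win n w k')) / real k' \<le> (\<Sum>w<n. h (win n w k)) / real k"
proof -
  define a where "a k = (\<Sum>w<n. h (win n w k))" for k
  have a0: "a 0 = 0" unfolding a_def using h0 by simp
  have cv: "a (k + 1) + a (k - 1) \<le> 2 * a k" if "1 \<le> k" "k + 1 \<le> n" for k
  proof -
    have "h (win n w (Suc k)) + h (win n (Suc w) (k - 1)) \<le> h (win n w k) + h (win n (Suc w) k)" for w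
      using submod[of "win n w k" "win n (Suc w) k"] win_union[OF that(1), of n w] win_inter[OF that, of w]
      by simp
    then have "(\<Sum>w<n. h (win n w (Suc k)) + h (win n (Suc w) (k - 1))) \<le> (\<Sum>w<n. h (win n w k) + h (win n (Suc w) k))"
      by (rule sum_mono)
    then show ?thesis unfolding a_def
      by (simp add: sum.distrib sum_win_shift[of h])
  qed
  show ?thesis using concave_seq_ratio[of a n k k', OF a0 cv k kk kn] unfolding a_def by simp
qed



lemma chain:
  fixes Hh :: "'f set \<Rightarrow> nat set \<Rightarrow> real" and T :: "nat \<Rightarrow> 'f set" and c :: "nat \<Rightarrow> real"
    and s :: "nat \<Rightarrow> nat"
  assumes submod: "\<And>S A B. Hh S (A \<union> B) + Hh S (A \<inter> B) \<le> Hh S A + Hh S B"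
    and zero: "\<And>S. Hh S {} = 0"
    and nonneg: "\<And>S A. 0 \<le> Hh S A"
    and step: "\<And>S i w. i \<in> Lv \<Longrightarrow> S \<subseteq> \<Union> (T ` (Lv - {i})) \<Longrightarrow> w < n \<Longrightarrow>
                  c i + Hh (S \<union> T i) (win n w (s i)) \<le> Hh S (win n w (s i))"
    and srange: "\<And>i. i \<in> Lv \<Longrightarrow> 1 \<le> s i \<and> s i \<le> n"
  shows "distinct ls \<Longrightarrow> sorted (map s ls) \<Longrightarrow> set ls \<subseteq> Lv \<Longrightarrow> S \<subseteq> \<Union> (T ` (Lv - set ls)) \<Longrightarrow>
         1 \<le> k \<Longrightarrow> (\<forall>i\<in>set ls. k \<le> s i) \<Longrightarrow>
         (\<Sum>i\<leftarrow>ls. real n * c i / real (s i)) \<le> (\<Sum>w<n. Hh S (win n w k)) / real k"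
proof (induction ls arbitrary: S k)
  case Nil
  have "0 \<le> (\<Sum>w<n. Hh S (win n w k))" by (intro sum_nonneg nonneg)
  then show ?case by simp
next
  case (Cons i ls)
  have iL: "i \<in> Lv" using Cons.prems by simp
  have si: "1 \<le> s i" "s i \<le> n" using srange[OF iL] by auto
  have ks: "k \<le> s i" using Cons.prems by simp
  have S1: "S \<subseteq> \<Union> (T ` (Lv - {i}))" using Cons.prems(4) by auto
  have ih: "(\<Sum>j\<leftarrow>ls. real n * c j / real (s j)) \<le> (\<Sum>w<n. Hh (S \<union> T i) (win n w (s i))) / real (s i)"
  proof (rule Cons.IH)
    show "distinct ls" using Cons.prems by simp
    show "sorted (map s ls)" using Cons.prems by simp
    show "set ls \<subseteq> Lv" using Cons.prems by simp
    show "S \<union> T i \<subseteq> \<Union> (T ` (Lv - set ls))" using Cons.prems(1,3,4) by auto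
    show "1 \<le> s i" by (rule si(1))
    show "\<forall>j\<in>set ls. s i \<le> s j" using Cons.prems(2) by simp
  qed
  have "(\<Sum>w<n. c i + Hh (S \<union> T i) (win n w (s i))) \<le> (\<Sum>w<n. Hh S (win n w (s i)))"
    by (intro sum_mono step[OF iL S1]) simp
  then have "real n * c i + (\<Sum>w<n. Hh (S \<union> T i) (win n w (s i))) \<le> (\<Sum>w<n. Hh S (win n w (s i)))"
    by (simp add: sum.distrib)
  then have "real n * c i / real (s i) + (\<Sum>w<n. Hh (S \<union> T i) (win n w (s i))) / real (s i)
      \<le> (\<Sum>w<n. Hh S (win n w (s i))) / real (s i)"
    using si by (simp add: add_divide_distrib[symmetric] divide_right_mono)
  also have "\<dots> \<le> (\<Sum>w<n. Hh S (win n w k)) / real k"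
    by (rule window_ratio[OF submod zero]) (use Cons.prems ks si in auto)
  finally show ?case using ih by simp
qed



definition rs :: "(nat \<times> nat) set \<Rightarrow> library \<Rightarrow> library" where
  "rs S l = (\<lambda>x. if x \<in> S then l x else [])"

definition YA :: "(nat \<Rightarrow> 'l \<Rightarrow> 'y) \<Rightarrow> nat set \<Rightarrow> 'l \<Rightarrow> nat \<Rightarrow> 'y option" where
  "YA Yb A l = (\<lambda>j. if j \<in> A then Some (Yb j l) else None)"

definition Hh :: "library set \<Rightarrow> (nat \<Rightarrow> library \<Rightarrow> 'y) \<Rightarrow> (nat \<times> nat) set \<Rightarrow> nat set \<Rightarrow> real" where
  "Hh G Yb S A = ent G (\<lambda>l. (YA Yb A l, rs S l)) - ent G (rs S)"

lemma YA_eq: "YA Yb A l1 = YA Yb A l2 \<longleftrightarrow> (\<forall>j\<in>A. Yb j l1 = Yb j l2)"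
  unfolding YA_def fun_eq_iff by (metis option.inject option.distinct(1))

lemma rs_eq: "rs S l1 = rs S l2 \<longleftrightarrow> (\<forall>x\<in>S. l1 x = l2 x)"
  unfolding rs_def fun_eq_iff by metis

lemma ent_subadd:
  assumes fin: "finite G"
  shows "ent G (\<lambda>l. (X l, Y l)) \<le> ent G X + ent G Y"
proof -
  have "ent G (\<lambda>l. (X l, Y l, ())) + ent G (\<lambda>l. ()) \<le> ent G (\<lambda>l. (X l, ())) + ent G (\<lambda>l. (Y l, ()))"
    by (rule ent_submod[OF fin])
  moreover have "ent G (\<lambda>l. (X l, Y l, ())) = ent G (\<lambda>l. (X l, Y l))" by (rule ent_cong[OF fin]) simp
  moreover have "ent G (\<lambda>l. (X l, ())) = ent G X" by (rule ent_cong[OF fin]) simp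
  moreover have "ent G (\<lambda>l. (Y l, ())) = ent G Y" by (rule ent_cong[OF fin]) simp
  ultimately show ?thesis using ent_const[of G "()"] by simp
qed

lemma Hh_submod:
  assumes fin: "finite G"
  shows "Hh G Yb S (A \<union> B) + Hh G Yb S (A \<inter> B) \<le> Hh G Yb S A + Hh G Yb S B"
proof -
  let ?Z = "\<lambda>l. (YA Yb (A \<inter> B) l, rs S l)"
  have sm: "ent G (\<lambda>l. (YA Yb A l, YA Yb B l, ?Z l)) + ent G ?Z \<le> ent G (\<lambda>l. (YA Yb A l, ?Z l)) + ent G (\<lambda>l. (YA Yb B l, ?Z l))"
    by (rule ent_submod[OF fin])
  have c1: "ent G (\<lambda>l. (YA Yb A l, YA Yb B l, ?Z l)) = ent G (\<lambda>l. (YA Yb (A \<union> B) l, rs S l))"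
    by (rule ent_cong[OF fin]) (simp add: YA_eq, blast)
  have c2: "ent G (\<lambda>l. (YA Yb A l, ?Z l)) = ent G (\<lambda>l. (YA Yb A l, rs S l))"
    by (rule ent_cong[OF fin]) (simp add: YA_eq, blast)
  have c3: "ent G (\<lambda>l. (YA Yb B l, ?Z l)) = ent G (\<lambda>l. (YA Yb B l, rs S l))"
    by (rule ent_cong[OF fin]) (simp add: YA_eq, blast)
  show ?thesis using sm c1 c2 c3 unfolding Hh_def by simp
qed

lemma Hh_empty: "finite G \<Longrightarrow> Hh G Yb S {} = 0"
  unfolding Hh_def by (subst ent_cong[of G _ "rs S"]) (auto simp: YA_eq)

lemma Hh_nonneg: "finite G \<Longrightarrow> 0 \<le> Hh G Yb S A"
  unfolding Hh_def by (simp add: ent_mono)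

lemma card_fixed:
  assumes "finite S"
  shows "card {f::library. (\<forall>x\<in>S. length (f x) = F) \<and> (\<forall>x. x \<notin> S \<longrightarrow> f x = [])} = 2 ^ (F * card S)"
proof -
  let ?A = "{f::library. (\<forall>x\<in>S. length (f x) = F) \<and> (\<forall>x. x \<notin> S \<longrightarrow> f x = [])}"
  let ?B = "PiE S (\<lambda>_. {xs::bool list. length xs = F})"
  have bij: "bij_betw (\<lambda>f. restrict f S) ?A ?B"
  proof (rule bij_betw_byWitness[where f' = "\<lambda>g x. if x \<in> S then g x else []"])
    show "\<forall>a\<in>?A. (\<lambda>x. if x \<in> S then restrict a S x else []) = a" by (auto simp: fun_eq_iff)
    show "\<forall>a'\<in>?B. restrict (\<lambda>x. if x \<in> S then a' x else []) S = a'"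
      by (auto simp: fun_eq_iff PiE_def extensional_def)
    show "(\<lambda>f. restrict f S) ` ?A \<subseteq> ?B" by auto
    show "(\<lambda>g x. if x \<in> S then g x else []) ` ?B \<subseteq> ?A" by auto
  qed
  have cl: "card {xs::bool list. length xs = F} = 2 ^ F"
    using card_lists_length_eq[of "UNIV::bool set" F] by simp
  have "card ?A = card ?B" by (rule bij_betw_same_card[OF bij])
  also have "\<dots> = (2 ^ F) ^ card S" using assms by (simp add: card_PiE cl)
  finally show ?thesis by (simp add: power_mult)
qed

lemma finite_files: "finite (files L N)"
proof -
  have "files L N \<subseteq> {1..L} \<times> {..<Max (N ` {1..L})}"
  proof
    fix x assume "x \<in> files L N"
    then obtain i m where x: "x = (i, m)" "i \<in> {1..L}" "m < N i" unfolding files_def by auto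
    have "N i \<le> Max (N ` {1..L})" using x by (intro Max_ge) auto
    then have "m < Max (N ` {1..L})" using x(3) by linarith
    then show "x \<in> {1..L} \<times> {..<Max (N ` {1..L})}" using x by auto
  qed
  then show ?thesis by (rule finite_subset) auto
qed

lemma card_libraries: "card (libraries L N F) = 2 ^ (F * card (files L N))"
  unfolding libraries_def using card_fixed[OF finite_files] by simp

lemma ent_rs_le:
  assumes G: "G \<subseteq> libraries L N F" "finite G" "G \<noteq> {}" and S: "S \<subseteq> files L N"
  shows "ent G (rs S) \<le> real F * real (card S)"
proof -
  have fS: "finite S" using S finite_files finite_subset by blast
  have sub: "rs S ` G \<subseteq> {f::library. (\<forall>x\<in>S. length (f x) = F) \<and> (\<forall>x. x \<notin> S \<longrightarrow> f x = [])}"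
  proof
    fix f assume "f \<in> rs S ` G"
    then obtain l where l: "l \<in> G" "f = rs S l" by blast
    have "l \<in> libraries L N F" using l G(1) by blast
    then have "\<forall>x\<in>files L N. length (l x) = F" unfolding libraries_def by blast
    then show "f \<in> {f::library. (\<forall>x\<in>S. length (f x) = F) \<and> (\<forall>x. x \<notin> S \<longrightarrow> f x = [])}"
      using l S unfolding rs_def by auto
  qed
  have "card (rs S ` G) \<le> 2 ^ (F * card S)"
    using card_mono[OF _ sub] card_fixed[OF fS, of F] fS
    by (metis (no_types, lifting) card.infinite not_less_zero power_not_zero zero_neq_numeral
        card_gt_0_iff)
  moreover have "0 < card (rs S ` G)" using G by (simp add: card_gt_0_iff)
  ultimately have "log 2 (real (card (rs S ` G))) \<le> log 2 (2 ^ (F * card S))"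
    by (subst log_le_cancel_iff) (auto simp del: of_nat_power simp add: of_nat_power[symmetric])
  also have "\<dots> = real F * real (card S)" by (simp add: log_nat_power)
  finally show ?thesis using ent_le_card[OF G(2,3), of "rs S"] by simp
qed

lemma indep:
  assumes G: "G \<subseteq> libraries L N F" "finite G" "G \<noteq> {}"
    and half: "card (libraries L N F) \<le> 2 * card G"
    and SD: "S \<inter> D = {}" "S \<union> D \<subseteq> files L N"
  shows "real (card D) * real F - 1 \<le> ent G (rs (S \<union> D)) - ent G (rs S)"
proof -
  define R where "R = files L N - (S \<union> D)"
  have ff: "finite (files L N)" by (rule finite_files)
  have fS: "finite S" "finite D" "finite R" using SD ff R_def finite_subset by auto
  have cf: "card (files L N) = card S + card D + card R"
  proof -
    have "files L N = S \<union> D \<union> R" using SD unfolding R_def by auto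
    moreover have "card (S \<union> D \<union> R) = card (S \<union> D) + card R"
      by (rule card_Un_disjoint) (use fS R_def in auto)
    moreover have "card (S \<union> D) = card S + card D" by (rule card_Un_disjoint) (use fS SD in auto)
    ultimately show ?thesis by simp
  qed
  have inj: "inj_on (rs (files L N)) G"
  proof (rule inj_onI)
    fix x y assume xy: "x \<in> G" "y \<in> G" "rs (files L N) x = rs (files L N) y"
    have "l = rs (files L N) l" if "l \<in> G" for l
    proof -
      have "l \<in> libraries L N F" using that G(1) by blast
      then have "\<forall>x. x \<notin> files L N \<longrightarrow> l x = []" unfolding libraries_def by blast
      then show ?thesis unfolding rs_def fun_eq_iff by simp
    qed
    then have "x = rs (files L N) x" "y = rs (files L N) y" using xy by auto
    then show "x = y" using xy by simp
  qed
  have e1: "ent G (rs (files L N)) = log 2 (real (card G))" by (rule ent_inj[OF G(2) inj])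
  have e2: "ent G (rs (files L N)) = ent G (\<lambda>l. (rs (S \<union> D) l, rs R l))"
    by (rule ent_cong[OF G(2)]) (use SD in \<open>auto simp: rs_eq R_def\<close>)
  have e3: "ent G (\<lambda>l. (rs (S \<union> D) l, rs R l)) \<le> ent G (rs (S \<union> D)) + ent G (rs R)"
    by (rule ent_subadd[OF G(2)])
  have e4: "ent G (rs R) \<le> real F * real (card R)" by (rule ent_rs_le[OF G]) (auto simp: R_def)
  have e5: "ent G (rs S) \<le> real F * real (card S)" by (rule ent_rs_le[OF G]) (use SD in auto)
  have cG: "0 < card G" using G by (simp add: card_gt_0_iff)
  have "real (card (libraries L N F)) \<le> 2 * real (card G)" using half by linarith
  then have "real F * real (card (files L N)) - 1 \<le> log 2 (real (card G))"
  proof -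
    assume h: "real (card (libraries L N F)) \<le> 2 * real (card G)"
    have "real F * real (card (files L N)) = log 2 (real (card (libraries L N F)))"
      unfolding card_libraries by (simp add: log_nat_power)
    also have "\<dots> \<le> log 2 (2 * real (card G))"
      using h cG by (subst log_le_cancel_iff) (auto simp: card_libraries)
    also have "\<dots> = 1 + log 2 (real (card G))" using cG by (simp add: log_mult)
    finally show ?thesis by simp
  qed
  then show ?thesis using e1 e2 e3 e4 e5 cf by (simp add: algebra_simps)
qed

lemma Hh_step:
  assumes G: "G \<subseteq> libraries L N F" "finite G" "G \<noteq> {}"
    and half: "card (libraries L N F) \<le> 2 * card G"
    and SD: "S \<inter> D = {}" "S \<union> D \<subseteq> files L N"
    and det: "\<forall>l1\<in>G. \<forall>l2\<in>G. (\<forall>j\<in>A. Yb j l1 = Yb j l2) \<longrightarrow> (\<forall>x\<in>D. l1 x = l2 x)"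
  shows "real (card D) * real F - 1 + Hh G Yb (S \<union> D) A \<le> Hh G Yb S A"
proof -
  have c: "ent G (\<lambda>l. (YA Yb A l, rs S l)) = ent G (\<lambda>l. (YA Yb A l, rs (S \<union> D) l))"
    by (rule ent_cong[OF G(2)]) (use det in \<open>auto simp: YA_eq rs_eq\<close>)
  show ?thesis using indep[OF G half SD] c unfolding Hh_def by simp
qed



definition code :: "nat \<Rightarrow> nat \<Rightarrow> nat \<Rightarrow> nat \<Rightarrow> nat \<Rightarrow> nat \<Rightarrow> nat \<Rightarrow> nat \<Rightarrow> nat \<Rightarrow> nat" where
  "code s t b U a c a' \<beta> u = (((a * t + c) * s + a') * b + \<beta>) * U + u"

lemma code_digits:
  fixes q :: nat
  shows "code s t b U (q div U div b div s div t) (q div U div b div s mod t) (q div U div b mod s)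
      (q div U mod b) (q mod U) = q"
  unfolding code_def by (simp add: div_mult_mod_eq)

lemma digit_bound:
  fixes q s t b U :: nat
  assumes "q < s * t * s * b * U"
  shows "q div U div b div s div t < s"
proof -
  have "q < (s * t * s * b) * U" using assms by (simp add: mult.assoc)
  then have "q div U < s * t * s * b" by (rule less_mult_imp_div_less)
  then have "q div U div b < s * t * s" by (rule less_mult_imp_div_less)
  then have "q div U div b div s < s * t" by (rule less_mult_imp_div_less)
  then show ?thesis by (rule less_mult_imp_div_less)
qed

lemma shift_mod: "(a::nat) < s \<Longrightarrow> (w + (a + s - w mod s) mod s) mod s = a"
proof -
  assume a: "a < s"
  have "(w + (a + s - w mod s) mod s) mod s = (w + (a + s - w mod s)) mod s"
    by (rule mod_add_right_eq)
  also have "\<dots> = (w mod s + (a + s - w mod s)) mod s" by (simp add: mod_add_left_eq)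
  also have "w mod s + (a + s - w mod s) = a + s"
  proof -
    have "w mod s < s" using a by simp
    then show ?thesis by linarith
  qed
  also have "(a + s) mod s = a" using a by simp
  finally show ?thesis .
qed

lemma ee_lemma:
  fixes P s w x x' :: nat
  assumes x: "x < s" "x' < s" and P: "2 * s \<le> P"
  shows "((w + x) mod P + s - 1 + P - (w + x') mod P) mod P = x + s - 1 - x'"
proof -
  have Pp: "0 < P" using x P by simp
  define Q where "Q = (w + x) mod P + s - 1 + P - (w + x') mod P"
  have lt: "(w + x') mod P < P" using Pp by simp
  have s1: "1 \<le> s" using x by simp
  have iQ: "int Q = int ((w + x) mod P) + int s - 1 + int P - int ((w + x') mod P)"
    unfolding Q_def using lt s1 by (simp add: of_nat_diff)
  define A where "A = int (w + x)"
  define B where "B = int (w + x')"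
  have eA: "int ((w + x) mod P) = A - int P * (A div int P)"
    unfolding A_def zmod_int by (simp add: minus_mult_div_eq_mod)
  have eB: "int ((w + x') mod P) = B - int P * (B div int P)"
    unfolding B_def zmod_int by (simp add: minus_mult_div_eq_mod)
  have "int Q = (A + int s - 1 + int P - B) + int P * (B div int P - A div int P)"
    unfolding iQ eA eB by (simp add: algebra_simps)
  then have "int Q mod int P = (A + int s - 1 + int P - B) mod int P" by simp
  also have "A + int s - 1 + int P - B = int (w + x) + int s - 1 + int P - int (w + x')"
    unfolding A_def B_def by simp
  also have "int (w + x) + int s - 1 + int P - int (w + x') = (int x + int s - 1 - int x') + int P"
    by simp
  also have "((int x + int s - 1 - int x') + int P) mod int P = (int x + int s - 1 - int x') mod int P"
    by simp
  also have "\<dots> = int x + int s - 1 - int x'"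
    using x P by (intro mod_pos_pos_trivial) auto
  finally have "int (Q mod P) = int (x + s - 1 - x')"
    using x by (simp add: zmod_int of_nat_diff)
  then show ?thesis unfolding Q_def by (simp only: of_nat_eq_iff)
qed

lemma sum_pow2_le: "(\<Sum>i\<le>r. (2::nat) ^ i) \<le> 2 ^ (r + 1)"
  by (induction r) auto



definition nn :: "nat \<Rightarrow> nat \<Rightarrow> nat \<Rightarrow> (nat \<Rightarrow> nat) \<Rightarrow> nat" where
  "nn K t L s = (K div t) * (\<Prod>i\<in>{1..L}. s i)"

definition dem :: "nat \<Rightarrow> nat \<Rightarrow> (nat \<Rightarrow> nat) \<Rightarrow> (nat \<Rightarrow> nat) \<Rightarrow> (nat \<Rightarrow> nat) \<Rightarrow> nat \<Rightarrow> nat \<Rightarrow> nat \<Rightarrow> demand" where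
  "dem K t N U s b j \<beta> = (\<lambda>i k u.
     code (s i) t b (U i) ((j + ((k div t) + s i - 1 + K div t - j mod (K div t)) mod (K div t) + 1) mod s i)
       (k mod t) (j mod s i) \<beta> u mod N i)"

definition Ybl :: "nat \<Rightarrow> nat \<Rightarrow> (nat \<Rightarrow> nat) \<Rightarrow> (nat \<Rightarrow> nat) \<Rightarrow> (nat \<Rightarrow> nat) \<Rightarrow> nat
    \<Rightarrow> (nat \<Rightarrow> library \<Rightarrow> bool list) \<Rightarrow> (demand \<Rightarrow> library \<Rightarrow> bool list)
    \<Rightarrow> nat \<Rightarrow> library \<Rightarrow> bool list list \<times> bool list list" where
  "Ybl K t N U s b \<phi> \<psi> j l =
     (map (\<lambda>\<beta>. \<psi> (dem K t N U s b j \<beta>) l) [0..<b], map (\<lambda>c. \<phi> ((j mod (K div t)) * t + c) l) [0..<t])"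

definition Dset :: "nat \<Rightarrow> (nat \<Rightarrow> nat) \<Rightarrow> (nat \<Rightarrow> nat) \<Rightarrow> (nat \<Rightarrow> nat) \<Rightarrow> nat \<Rightarrow> nat \<Rightarrow> (nat \<times> nat) set" where
  "Dset t N U s b i = (\<lambda>f. (i, f)) ` {..<min (s i * t * s i * b * U i) (N i)}"

context
  fixes K L b t :: nat and N U s :: "nat \<Rightarrow> nat" and M R :: real and F :: nat
    and \<phi> :: "nat \<Rightarrow> library \<Rightarrow> bool list" and \<psi> :: "demand \<Rightarrow> library \<Rightarrow> bool list"
    and \<mu> :: "demand \<Rightarrow> nat \<Rightarrow> nat \<Rightarrow> nat \<Rightarrow> bool list \<Rightarrow> bool list \<Rightarrow> bool list"
  assumes Nge: "\<forall>i\<in>{1..L}. N i \<ge> K * U i"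
    and b1: "b \<ge> 1" and t1: "1 \<le> t" and tK: "t \<le> K"
    and srng: "\<forall>i\<in>{1..L}. 1 \<le> s i \<and> s i \<le> K div (2 * t)"
    and M0: "M \<ge> 0"
    and sch: "caching_scheme K L N U F M R \<phi> \<psi> \<mu> (1 / (2 * real (nn K t L s) * real b))"
begin

abbreviation "P \<equiv> K div t"
abbreviation "n \<equiv> nn K t L s"
abbreviation "libs \<equiv> libraries L N F"
abbreviation "dm \<equiv> dem K t N U s b"
abbreviation "Yb \<equiv> Ybl K t N U s b \<phi> \<psi>"

definition GG :: "library set" where
  "GG = {l \<in> libs. \<forall>j<n. \<forall>\<beta><b. \<not> decoding_error K L U l \<phi> \<psi> \<mu> (dm j \<beta>)}"

lemma P_pos: "0 < P" using t1 tK by (simp add: div_greater_zero_iff)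

lemma two_s_le_P: "i \<in> {1..L} \<Longrightarrow> 2 * s i \<le> P"
proof -
  assume i: "i \<in> {1..L}"
  have "s i \<le> K div (2 * t)" using srng i by blast
  moreover have "2 * (K div (2 * t)) \<le> K div t"
  proof -
    have "2 * (K div (2 * t)) * t = (K div (2 * t)) * (2 * t)" by simp
    also have "\<dots> \<le> K" by simp
    finally have "2 * (K div (2 * t)) * t \<le> K" .
    then show ?thesis using t1 by (simp add: less_eq_div_iff_mult_less_eq)
  qed
  ultimately show ?thesis by linarith
qed

lemma n_pos: "0 < n"
  unfolding nn_def using P_pos srng by (auto intro!: prod_pos)

lemma s_dvd_n: "i \<in> {1..L} \<Longrightarrow> s i dvd n"
proof -
  assume "i \<in> {1..L}"
  then have "s i dvd (\<Prod>i\<in>{1..L}. s i)" by (intro dvd_prodI) auto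
  then show ?thesis unfolding nn_def by simp
qed

lemma P_dvd_n: "P dvd n"
  unfolding nn_def by simp

lemma s_le_n: "i \<in> {1..L} \<Longrightarrow> s i \<le> n"
proof -
  assume i: "i \<in> {1..L}"
  have "s i \<le> P" using two_s_le_P[OF i] by simp
  moreover have "P \<le> n" using P_dvd_n n_pos by (simp add: dvd_imp_le)
  ultimately show ?thesis by simp
qed

lemma K_pos: "0 < K" using t1 tK by simp

lemma dem_adm: "admissible_demand K L N U (dm j \<beta>)"
  unfolding admissible_demand_def
proof (intro ballI allI impI)
  fix i k u assume i: "i \<in> {1..L}" and k: "k < K" and u: "u < U i"
  have "0 < N i"
  proof -
    have "K * U i \<le> N i" using Nge i by blast
    moreover have "0 < K * U i" using K_pos u by simp
    ultimately show ?thesis by linarith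
  qed
  then show "dm j \<beta> i k u < N i" unfolding dem_def by simp
qed

lemma libs_card_pos: "0 < card libs"
  unfolding card_libraries by simp

lemma libs_finite: "finite libs"
  using libs_card_pos card_gt_0_iff by blast

lemma GG_sub: "GG \<subseteq> libs" unfolding GG_def by blast

lemma GG_finite: "finite GG" using finite_subset[OF GG_sub libs_finite] .

lemma err_card: "real (card {l \<in> libs. decoding_error K L U l \<phi> \<psi> \<mu> (dm j \<beta>)})
    \<le> real (card libs) / (2 * real n * real b)"
proof -
  have "error_prob K L N U F \<phi> \<psi> \<mu> (dm j \<beta>) \<le> 1 / (2 * real n * real b)"
    using sch dem_adm unfolding caching_scheme_def by blast
  then have "real (card {l \<in> libs. decoding_error K L U l \<phi> \<psi> \<mu> (dm j \<beta>)}) / real (card libs)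
      \<le> 1 / (2 * real n * real b)" unfolding error_prob_def .
  then show ?thesis using libs_card_pos by (simp add: divide_le_eq)
qed

lemma GG_half: "card libs \<le> 2 * card GG"
proof -
  define E where "E j \<beta> = {l \<in> libs. decoding_error K L U l \<phi> \<psi> \<mu> (dm j \<beta>)}" for j \<beta>
  have sub: "libs - GG \<subseteq> (\<Union>j<n. \<Union>\<beta><b. E j \<beta>)" unfolding GG_def E_def by blast
  have "card (libs - GG) \<le> card (\<Union>j<n. \<Union>\<beta><b. E j \<beta>)"
    by (rule card_mono[OF _ sub]) (auto simp: E_def libs_finite)
  also have "\<dots> \<le> (\<Sum>j<n. card (\<Union>\<beta><b. E j \<beta>))" by (rule card_UN_le) simp
  also have "\<dots> \<le> (\<Sum>j<n. \<Sum>\<beta><b. card (E j \<beta>))"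
    by (intro sum_mono card_UN_le) simp
  finally have c1: "real (card (libs - GG)) \<le> (\<Sum>j<n. \<Sum>\<beta><b. real (card (E j \<beta>)))"
    by (simp flip: of_nat_sum)
  also have "\<dots> \<le> (\<Sum>j<n. \<Sum>\<beta><b. real (card libs) / (2 * real n * real b))"
    by (intro sum_mono) (simp add: E_def err_card)
  also have "\<dots> = real (card libs) / 2" using n_pos b1 by simp
  finally have "real (card (libs - GG)) \<le> real (card libs) / 2" .
  moreover have "card (libs - GG) = card libs - card GG"
    by (rule card_Diff_subset[OF GG_finite GG_sub])
  moreover have "card GG \<le> card libs" by (rule card_mono[OF libs_finite GG_sub])
  ultimately show ?thesis by (simp add: of_nat_diff)
qed

lemma decode:
  assumes i: "i \<in> {1..L}" and w: "w < n" and l1: "l1 \<in> GG" and l2: "l2 \<in> GG"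
    and eq: "\<forall>j\<in>win n w (s i). Yb j l1 = Yb j l2"
    and xD: "x \<in> Dset t N U s b i"
  shows "l1 x = l2 x"
proof -
  define si where "si = s i"
  define Ui where "Ui = U i"
  obtain f where x: "x = (i, f)" and f1: "f < si * t * si * b * Ui" and f2: "f < N i"
    using xD unfolding Dset_def si_def Ui_def by auto
  have pp: "0 < si * t * si * b * Ui" using f1 by linarith
  have pos: "0 < Ui" "0 < b" "0 < si" "0 < t"
    using pp by (simp_all add: zero_less_mult_iff)
  define a where "a = f div Ui div b div si div t"
  define c where "c = f div Ui div b div si mod t"
  define a' where "a' = f div Ui div b mod si"
  define \<beta> where "\<beta> = f div Ui mod b"
  define u where "u = f mod Ui"
  have a_lt: "a < si" unfolding a_def using digit_bound[OF f1] .
  have c_lt: "c < t" unfolding c_def using pos by simp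
  have a'_lt: "a' < si" unfolding a'_def using pos by simp
  have \<beta>_lt: "\<beta> < b" unfolding \<beta>_def using pos by simp
  have u_lt: "u < Ui" unfolding u_def using pos by simp
  have codef: "code si t b Ui a c a' \<beta> u = f"
    unfolding a_def c_def a'_def \<beta>_def u_def by (rule code_digits)
  define xx where "xx = (a + si - w mod si) mod si"
  define xx' where "xx' = (a' + si - w mod si) mod si"
  have xx_lt: "xx < si" "xx' < si" unfolding xx_def xx'_def using pos by auto
  have xxa: "(w + xx) mod si = a" unfolding xx_def by (rule shift_mod[OF a_lt])
  have xxa': "(w + xx') mod si = a'" unfolding xx'_def by (rule shift_mod[OF a'_lt])
  define j where "j = (w + xx) mod n"
  define j' where "j' = (w + xx') mod n"
  have jw: "j \<in> win n w (s i)" "j' \<in> win n w (s i)"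
    unfolding j_def j'_def win_def using xx_lt si_def by auto
  have j'n: "j' < n" unfolding j'_def using n_pos by simp
  define k where "k = (j mod P) * t + c"
  have kdiv: "k div t = j mod P" unfolding k_def using c_lt by simp
  have kmod: "k mod t = c" unfolding k_def using c_lt by simp
  have kK: "k < K"
  proof -
    have "j mod P < P" using P_pos by simp
    then have "j mod P + 1 \<le> P" by simp
    then have "(j mod P + 1) * t \<le> P * t" by (rule mult_right_mono) simp
    also have "P * t \<le> K" by simp
    finally show ?thesis unfolding k_def using c_lt by (simp add: algebra_simps)
  qed
  have jP: "j mod P = (w + xx) mod P" unfolding j_def using P_dvd_n by (simp add: mod_mod_cancel)
  have j'P: "j' mod P = (w + xx') mod P" unfolding j'_def using P_dvd_n by (simp add: mod_mod_cancel)
  have sn: "si dvd n" unfolding si_def by (rule s_dvd_n[OF i])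
  have ee: "((k div t) + si - 1 + P - j' mod P) mod P = xx + si - 1 - xx'"
    unfolding kdiv jP j'P by (rule ee_lemma[OF xx_lt]) (use two_s_le_P[OF i] si_def in simp)
  have apart: "(j' + (xx + si - 1 - xx') + 1) mod si = a"
  proof -
    have e1: "xx + si - 1 - xx' + 1 = xx + si - xx'" using xx_lt by simp
    have "j' + (xx + si - 1 - xx') + 1 = j' + (xx + si - xx')" using xx_lt by simp
    then have "(j' + (xx + si - 1 - xx') + 1) mod si = (j' + (xx + si - xx')) mod si"
      by (simp only:)
    also have "\<dots> = (j' mod si + (xx + si - xx')) mod si" by (simp add: mod_add_left_eq)
    also have "j' mod si = (w + xx') mod si" unfolding j'_def using sn by (simp add: mod_mod_cancel)
    also have "((w + xx') mod si + (xx + si - xx')) mod si = (w + xx' + (xx + si - xx')) mod si"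
      by (simp add: mod_add_left_eq)
    also have "w + xx' + (xx + si - xx') = (w + xx) + si" using xx_lt by simp
    also have "((w + xx) + si) mod si = (w + xx) mod si" by simp
    finally show ?thesis using xxa by simp
  qed
  have a'part: "j' mod si = a'" unfolding j'_def using sn xxa' by (simp add: mod_mod_cancel)
  have dmf: "dm j' \<beta> i k u = f"
  proof -
    have "dm j' \<beta> i k u = code si t b Ui ((j' + ((k div t) + si - 1 + P - j' mod P) mod P + 1) mod si)
       (k mod t) (j' mod si) \<beta> u mod N i"
      unfolding dem_def si_def Ui_def by simp
    also have "\<dots> = code si t b Ui a c a' \<beta> u mod N i" unfolding ee apart kmod a'part ..
    also have "\<dots> = f" using codef f2 by simp
    finally show ?thesis .
  qed
  have uU: "u < U i" using u_lt Ui_def by simp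
  have dec: "\<mu> (dm j' \<beta>) i k u (\<psi> (dm j' \<beta>) l) (\<phi> k l) = l (i, f)" if l: "l \<in> GG" for l
  proof -
    have "\<not> decoding_error K L U l \<phi> \<psi> \<mu> (dm j' \<beta>)" using l j'n \<beta>_lt unfolding GG_def by blast
    then have "\<mu> (dm j' \<beta>) i k u (\<psi> (dm j' \<beta>) l) (\<phi> k l) = l (i, dm j' \<beta> i k u)"
      using i kK uU unfolding decoding_error_def by blast
    then show ?thesis using dmf by simp
  qed
  have Yj: "Yb j l1 = Yb j l2" and Yj': "Yb j' l1 = Yb j' l2" using eq jw by auto
  have psieq: "\<psi> (dm j' \<beta>) l1 = \<psi> (dm j' \<beta>) l2"
  proof -
    have "map (\<lambda>\<beta>. \<psi> (dm j' \<beta>) l1) [0..<b] = map (\<lambda>\<beta>. \<psi> (dm j' \<beta>) l2) [0..<b]"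
      using Yj' unfolding Ybl_def by simp
    then have "\<forall>x\<in>{0..<b}. \<psi> (dm j' x) l1 = \<psi> (dm j' x) l2" by simp
    then show ?thesis using \<beta>_lt by simp
  qed
  have phieq: "\<phi> k l1 = \<phi> k l2"
  proof -
    have "map (\<lambda>c. \<phi> ((j mod P) * t + c) l1) [0..<t] = map (\<lambda>c. \<phi> ((j mod P) * t + c) l2) [0..<t]"
      using Yj unfolding Ybl_def by simp
    then have "\<forall>x\<in>{0..<t}. \<phi> ((j mod P) * t + x) l1 = \<phi> ((j mod P) * t + x) l2" by simp
    then show ?thesis using c_lt unfolding k_def by simp
  qed
  show ?thesis using dec[OF l1] dec[OF l2] psieq phieq x by simp
qed

lemma GG_ne: "GG \<noteq> {}"
  using GG_half libs_card_pos by auto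

lemma card_lenle: "card {l::bool list. length l \<le> r} \<le> 2 ^ (r + 1)"
proof -
  have "card {l::bool list. length l \<le> r} = card {xs::bool list. set xs \<subseteq> UNIV \<and> length xs \<le> r}" by simp
  also have "\<dots> = (\<Sum>i\<le>r. 2 ^ i)" by (subst card_lists_length_le) simp_all
  also have "\<dots> \<le> 2 ^ (r + 1)" by (rule sum_pow2_le)
  finally show ?thesis .
qed

lemma card_lists_le:
  "card {xs::bool list list. set xs \<subseteq> {l. length l \<le> r} \<and> length xs = q} \<le> 2 ^ ((r + 1) * q)"
proof -
  have fin: "finite {l::bool list. length l \<le> r}"
    using finite_lists_length_le[of "UNIV::bool set" r] by simp
  have "card {xs::bool list list. set xs \<subseteq> {l. length l \<le> r} \<and> length xs = q} = (card {l::bool list. length l \<le> r}) ^ q"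
    by (rule card_lists_length_eq[OF fin])
  also have "\<dots> \<le> (2 ^ (r + 1)) ^ q" by (rule power_mono[OF card_lenle]) simp
  finally show ?thesis by (simp only: power_mult)
qed

lemma ent_Yb: "ent GG (Yb j) \<le> real b * (R * real F + 1) + real t * (M * real F + 1)"
proof -
  define r where "r = nat \<lfloor>R * real F\<rfloor>"
  define m where "m = nat \<lfloor>M * real F\<rfloor>"
  have psiL: "int (length (\<psi> (dm j' \<beta>) l)) \<le> \<lfloor>R * real F\<rfloor>" if "l \<in> GG" for j' \<beta> l
  proof -
    have "\<forall>d. admissible_demand K L N U d \<longrightarrow> (\<forall>lib\<in>libs. int (length (\<psi> d lib)) \<le> \<lfloor>R * real F\<rfloor>)"
      using sch unfolding caching_scheme_def by blast
    then show ?thesis using dem_adm that GG_sub by blast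
  qed
  have phiL: "int (length (\<phi> k l)) \<le> \<lfloor>M * real F\<rfloor>" if "l \<in> GG" "k < K" for k l
  proof -
    have "\<forall>k<K. \<forall>lib\<in>libs. int (length (\<phi> k lib)) \<le> \<lfloor>M * real F\<rfloor>"
      using sch unfolding caching_scheme_def by blast
    then show ?thesis using that GG_sub by blast
  qed
  obtain l0 where l0: "l0 \<in> GG" using GG_ne by blast
  have fl0: "0 \<le> \<lfloor>R * real F\<rfloor>" using psiL[OF l0, of j 0] by linarith
  have rR: "real r \<le> R * real F" unfolding r_def using fl0 by linarith
  have fm0: "0 \<le> \<lfloor>M * real F\<rfloor>" using M0 by simp
  have mM: "real m \<le> M * real F" unfolding m_def using fm0 by linarith
  let ?Ab = "{xs::bool list list. set xs \<subseteq> {l. length l \<le> r} \<and> length xs = b}"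
  let ?At = "{xs::bool list list. set xs \<subseteq> {l. length l \<le> m} \<and> length xs = t}"
  have sub: "Yb j ` GG \<subseteq> ?Ab \<times> ?At"
  proof
    fix y assume "y \<in> Yb j ` GG"
    then obtain l where l: "l \<in> GG" "y = Yb j l" by blast
    have A: "length (\<psi> (dm j \<beta>) l) \<le> r" for \<beta>
      using psiL[OF l(1), of j \<beta>] unfolding r_def by linarith
    have B: "length (\<phi> ((j mod P) * t + c) l) \<le> m" if "c < t" for c
    proof -
      have "j mod P < P" using P_pos by simp
      then have "j mod P + 1 \<le> P" by simp
      then have "(j mod P + 1) * t \<le> P * t" by (rule mult_right_mono) simp
      also have "P * t \<le> K" by simp
      finally have "(j mod P) * t + c < K" using that by (simp add: algebra_simps)
      then show ?thesis using phiL[OF l(1)] unfolding m_def by fastforce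
    qed
    show "y \<in> ?Ab \<times> ?At" using l A B unfolding Ybl_def by auto
  qed
  have finAb: "finite ?Ab"
    using finite_lists_length_eq[of "{l::bool list. length l \<le> r}" b]
      finite_lists_length_le[of "UNIV::bool set" r] by simp
  have finAt: "finite ?At"
    using finite_lists_length_eq[of "{l::bool list. length l \<le> m}" t]
      finite_lists_length_le[of "UNIV::bool set" m] by simp
  have "card (Yb j ` GG) \<le> card (?Ab \<times> ?At)"
    by (rule card_mono[OF _ sub]) (simp add: finAb finAt)
  also have "\<dots> = card ?Ab * card ?At" by (rule card_cartesian_product)
  also have "\<dots> \<le> 2 ^ ((r + 1) * b) * 2 ^ ((m + 1) * t)"
    by (rule mult_mono[OF card_lists_le card_lists_le]) simp_all
  also have "\<dots> = 2 ^ ((r + 1) * b + (m + 1) * t)" by (simp add: power_add)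
  finally have cY: "card (Yb j ` GG) \<le> 2 ^ ((r + 1) * b + (m + 1) * t)" .
  have cpos: "0 < card (Yb j ` GG)" using GG_ne GG_finite by (simp add: card_gt_0_iff)
  have "ent GG (Yb j) \<le> log 2 (real (card (Yb j ` GG)))" by (rule ent_le_card[OF GG_finite GG_ne])
  also have "\<dots> \<le> log 2 (2 ^ ((r + 1) * b + (m + 1) * t))"
  proof (subst log_le_cancel_iff)
    show "real (card (Yb j ` GG)) \<le> 2 ^ ((r + 1) * b + (m + 1) * t)"
      using cY by (metis numeral_power_le_of_nat_cancel_iff of_nat_le_iff of_nat_numeral of_nat_power)
  qed (use cpos in auto)
  also have "\<dots> = real ((r + 1) * b + (m + 1) * t)" by (simp add: log_nat_power)
  also have "\<dots> = real b * (real r + 1) + real t * (real m + 1)" by (simp add: algebra_simps)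
  also have "\<dots> \<le> real b * (R * real F + 1) + real t * (M * real F + 1)"
    using rR mM by (intro add_mono mult_left_mono) auto
  finally show ?thesis .
qed

lemma Dset_files: "i \<in> {1..L} \<Longrightarrow> Dset t N U s b i \<subseteq> files L N"
  unfolding Dset_def files_def by auto

lemma card_Dset: "card (Dset t N U s b i) = min (s i * t * s i * b * U i) (N i)"
  unfolding Dset_def by (subst card_image) (auto simp: inj_on_def)

lemma Hh_win1: assumes w: "w < n" shows "Hh GG Yb {} (win n w 1) \<le> ent GG (Yb w)"
proof -
  have wi: "win n w 1 = {w}" unfolding win_def using w by force
  have "ent GG (\<lambda>l. (YA Yb {w} l, rs {} l)) = ent GG (Yb w)"
    by (rule ent_cong[OF GG_finite]) (simp add: YA_eq rs_eq)
  then show ?thesis unfolding Hh_def wi using ent_nonneg[OF GG_finite, of "rs {}"] by simp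
qed

lemma min_ratio:
  assumes si: "0 < si" and b: "0 < b"
  shows "real (min (si * t * si * b * Ui) Ni) / real si = real b * min (real (si * t * Ui)) (real Ni / real (si * b))"
proof (cases "si * t * si * b * Ui \<le> Ni")
  case True
  then have "real (si * t * si * b * Ui) \<le> real Ni" by linarith
  then have "real (si * t * si * b * Ui) / real (si * b) \<le> real Ni / real (si * b)"
    using si b by (intro divide_right_mono) auto
  moreover have "real (si * t * si * b * Ui) / real (si * b) = real (si * t * Ui)" using si b by simp
  ultimately have m: "min (real (si * t * Ui)) (real Ni / real (si * b)) = real (si * t * Ui)" by simp
  show ?thesis using True si b unfolding m by simp
next
  case False
  then have "real Ni \<le> real (si * t * si * b * Ui)" by linarith
  then have "real Ni / real (si * b) \<le> real (si * t * si * b * Ui) / real (si * b)"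
    using si b by (intro divide_right_mono) auto
  moreover have "real (si * t * si * b * Ui) / real (si * b) = real (si * t * Ui)" using si b by simp
  ultimately have m: "min (real (si * t * Ui)) (real Ni / real (si * b)) = real Ni / real (si * b)" by simp
  show ?thesis using False si b unfolding m by simp
qed

lemma main_bound:
  assumes F0: "0 < F"
  shows "real b * (\<Sum>i=1..L. min (real (s i * t * U i)) (real (N i) / real (s i * b)))
     \<le> real b * R + real t * M + (real b + real t + real L) / real F"
proof -
  define ls where "ls = sort_key s [1..<Suc L]"
  have ls: "distinct ls" "sorted (map s ls)" "set ls = {1..L}"
    unfolding ls_def by (auto simp: distinct_sort)
  define T where "T = Dset t N U s b"
  define c where "c i = real (card (T i)) * real F - 1" for i
  have ch: "(\<Sum>i\<leftarrow>ls. real n * c i / real (s i)) \<le> (\<Sum>w<n. Hh GG Yb {} (win n w 1)) / real 1"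
  proof (rule chain[where Lv = "{1..L}" and T = T])
    show "Hh GG Yb S (A \<union> B) + Hh GG Yb S (A \<inter> B) \<le> Hh GG Yb S A + Hh GG Yb S B" for S A B
      by (rule Hh_submod[OF GG_finite])
    show "Hh GG Yb S {} = 0" for S by (rule Hh_empty[OF GG_finite])
    show "0 \<le> Hh GG Yb S A" for S A by (rule Hh_nonneg[OF GG_finite])
    show "1 \<le> s i \<and> s i \<le> n" if "i \<in> {1..L}" for i using srng that s_le_n by blast
    show "c i + Hh GG Yb (S \<union> T i) (win n w (s i)) \<le> Hh GG Yb S (win n w (s i))"
      if i: "i \<in> {1..L}" and S: "S \<subseteq> \<Union> (T ` ({1..L} - {i}))" and w: "w < n" for S i w
    proof -
      have disj: "S \<inter> T i = {}"
      proof -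
        have "x \<notin> T i" if xS: "x \<in> S" for x
        proof -
          obtain i' where i': "i' \<in> {1..L} - {i}" "x \<in> T i'" using S xS by blast
          then have "fst x = i'" unfolding T_def Dset_def by auto
          moreover have "y \<in> T i \<Longrightarrow> fst y = i" for y unfolding T_def Dset_def by auto
          ultimately show ?thesis using i' by (metis DiffD2 singletonI)
        qed
        then show ?thesis by blast
      qed
      have fl: "S \<union> T i \<subseteq> files L N"
      proof -
        have "T i' \<subseteq> files L N" if "i' \<in> {1..L}" for i' unfolding T_def by (rule Dset_files[OF that])
        then show ?thesis using S i by blast
      qed
      have det: "\<forall>l1\<in>GG. \<forall>l2\<in>GG. (\<forall>j\<in>win n w (s i). Yb j l1 = Yb j l2) \<longrightarrow> (\<forall>x\<in>T i. l1 x = l2 x)"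
        unfolding T_def using decode[OF i w] by blast
      show ?thesis unfolding c_def
        by (rule Hh_step[OF GG_sub GG_finite GG_ne GG_half disj fl det])
    qed
  qed (use ls srng in auto)
  have s2: "(\<Sum>w<n. Hh GG Yb {} (win n w 1)) \<le> (\<Sum>w<n. real b * (R * real F + 1) + real t * (M * real F + 1))"
    by (intro sum_mono order.trans[OF Hh_win1 ent_Yb]) simp
  have s3: "(\<Sum>i\<leftarrow>ls. real n * c i / real (s i)) = (\<Sum>i=1..L. real n * c i / real (s i))"
    using ls by (simp add: sum_list_distinct_conv_sum_set)
  have s4: "real n * (real F * real b * min (real (s i * t * U i)) (real (N i) / real (s i * b)) - 1) \<le> real n * c i / real (s i)"
    if i: "i \<in> {1..L}" for i
  proof -
    have "1 \<le> s i" using srng i by blast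
    then have si: "0 < s i" by simp
    define mi where "mi = min (real (s i * t * U i)) (real (N i) / real (s i * b))"
    have e1: "c i / real (s i) = real F * (real (card (T i)) / real (s i)) - 1 / real (s i)"
      unfolding c_def by (simp add: diff_divide_distrib)
    have e2: "real (card (T i)) / real (s i) = real b * mi"
      unfolding T_def card_Dset mi_def using min_ratio[OF si] b1 by simp
    have e3: "1 / real (s i) \<le> 1" using si by simp
    have e4: "c i / real (s i) = real F * real b * mi - 1 / real (s i)"
      unfolding e1 e2 by (simp only: mult.assoc)
    have "real F * real b * mi - 1 \<le> c i / real (s i)" using e3 e4 by linarith
    then have "real n * (real F * real b * mi - 1) \<le> real n * (c i / real (s i))"
      by (rule mult_left_mono) simp
    then show ?thesis unfolding mi_def by simp
  qed
  define mm where "mm i = min (real (s i * t * U i)) (real (N i) / real (s i * b))" for i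
  define Tg where "Tg = (\<Sum>i=1..L. mm i)"
  have q1: "(\<Sum>i=1..L. real F * real b * mm i - 1) = real F * real b * Tg - real L"
    unfolding Tg_def by (simp add: sum_subtractf sum_distrib_left)
  have "real n * (real F * real b * Tg - real L) = (\<Sum>i=1..L. real n * (real F * real b * mm i - 1))"
    unfolding q1[symmetric] by (simp add: sum_distrib_left)
  also have "\<dots> = (\<Sum>i=1..L. real n * (real F * real b * min (real (s i * t * U i)) (real (N i) / real (s i * b)) - 1))"
    unfolding mm_def ..
  also have "\<dots> \<le> (\<Sum>i=1..L. real n * c i / real (s i))" by (rule sum_mono[OF s4])
  also have "\<dots> \<le> (\<Sum>w<n. Hh GG Yb {} (win n w 1))" using ch s3 by simp
  also have "\<dots> \<le> real n * (real b * (R * real F + 1) + real t * (M * real F + 1))" using s2 by simp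
  finally have "real F * real b * Tg - real L \<le> real b * (R * real F + 1) + real t * (M * real F + 1)"
    using n_pos by (simp add: mult_le_cancel_left_pos)
  then have "real F * (real b * Tg) \<le> real F * (real b * R + real t * M) + (real b + real t + real L)"
    by (simp add: algebra_simps)
  then have "real b * Tg \<le> (real F * (real b * R + real t * M) + (real b + real t + real L)) / real F"
    using F0 by (simp add: le_divide_eq mult.commute)
  also have "\<dots> = real b * R + real t * M + (real b + real t + real L) / real F"
    using F0 by (simp add: add_divide_distrib)
  finally show ?thesis unfolding Tg_def mm_def .
qed

end



lemma take_drop_concat:
  assumes "\<forall>x\<in>set xs. length (g x) = F" and "p < length xs"
  shows "take F (drop (F * p) (concat (map g xs))) = g (xs ! p)"
  using assms
proof (induction xs arbitrary: p)
  case Nil then show ?case by simp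
next
  case (Cons y ys)
  show ?case
  proof (cases p)
    case 0 then show ?thesis using Cons.prems by simp
  next
    case (Suc p')
    have ly: "length (g y) = F" using Cons.prems by simp
    have "drop (F * p) (concat (map g (y # ys))) = drop (F * p') (concat (map g ys))"
      using ly Suc by (simp add: algebra_simps)
    then show ?thesis using Cons.IH[of p'] Cons.prems Suc by simp
  qed
qed

lemma achievable_exists:
  assumes M0: "M \<ge> 0"
  shows "achievable K L N U (real (card (files L N))) M"
proof -
  obtain fl where setfl: "set fl = files L N" and dfl: "distinct fl"
    using finite_distinct_list[OF finite_files] by blast
  have lenfl: "length fl = card (files L N)" using setfl dfl distinct_card by fastforce
  show ?thesis unfolding achievable_def
proof (intro allI impI exI)
  fix eps :: real and F :: nat assume eps: "0 < eps"
  define \<phi> where "\<phi> = (\<lambda>(k::nat) (lib::library). ([]::bool list))"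
  define \<psi> where "\<psi> = (\<lambda>(d::demand) (lib::library). concat (map lib fl))"
  define \<mu> where "\<mu> = (\<lambda>(d::demand) (i::nat) (k::nat) (u::nat) (X::bool list) (Z::bool list).
      take F (drop (F * (SOME p. p < length fl \<and> fl ! p = (i, d i k u))) X))"
  show "caching_scheme K L N U F M (real (card (files L N))) \<phi> \<psi> \<mu> eps"
    unfolding caching_scheme_def
  proof (intro conjI allI impI ballI)
    fix k lib show "int (length (\<phi> k lib)) \<le> \<lfloor>M * real F\<rfloor>" unfolding \<phi>_def using M0 by simp
  next
    fix d lib assume lib: "lib \<in> libraries L N F"
    have "length (concat (map lib fl)) = F * length fl"
    proof -
      have "\<forall>x\<in>set fl. length (lib x) = F" using lib setfl unfolding libraries_def by auto
      then have "length (concat (map lib fl)) = sum_list (map (\<lambda>x. F) fl)"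
        by (simp add: length_concat o_def cong: map_cong)
      also have "\<dots> = F * length fl" by (simp add: sum_list_triv)
      finally show ?thesis .
    qed
    moreover have "\<lfloor>real (card (files L N)) * real F\<rfloor> = int (card (files L N) * F)"
      by (metis floor_of_nat of_nat_mult)
    ultimately show "int (length (\<psi> d lib)) \<le> \<lfloor>real (card (files L N)) * real F\<rfloor>"
      unfolding \<psi>_def lenfl by (simp add: mult.commute)
  next
    fix d assume d: "admissible_demand K L N U d"
    have E: "{lib \<in> libraries L N F. decoding_error K L U lib \<phi> \<psi> \<mu> d} = {}"
    proof -
      have "\<not> decoding_error K L U lib \<phi> \<psi> \<mu> d" if lib: "lib \<in> libraries L N F" for lib
        unfolding decoding_error_def
      proof (intro notI, elim bexE exE conjE)
        fix i k u assume i: "i \<in> {1..L}" and k: "k < K" and u: "u < U i"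
          and ne: "\<mu> d i k u (\<psi> d lib) (\<phi> k lib) \<noteq> lib (i, d i k u)"
        have mem: "(i, d i k u) \<in> set fl" using d i k u setfl unfolding admissible_demand_def files_def by auto
        have len: "\<forall>x\<in>set fl. length (lib x) = F" using lib setfl unfolding libraries_def by auto
        define p where "p = (SOME p. p < length fl \<and> fl ! p = (i, d i k u))"
        have "\<exists>p. p < length fl \<and> fl ! p = (i, d i k u)" using mem by (simp add: in_set_conv_nth)
        then have p: "p < length fl \<and> fl ! p = (i, d i k u)" unfolding p_def by (rule someI_ex)
        have "\<mu> d i k u (\<psi> d lib) (\<phi> k lib) = lib (fl ! p)"
          unfolding \<mu>_def \<psi>_def p_def[symmetric] by (rule take_drop_concat[OF len]) (use p in simp)
        also have "\<dots> = lib (i, d i k u)" using p by simp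
        finally show False using ne by simp
      qed
      then show ?thesis by blast
    qed
    show "error_prob K L N U F \<phi> \<psi> \<mu> d \<le> eps" unfolding error_prob_def E using eps by simp
  qed
qed
qed

theorem lemma4:
  fixes K L b t :: nat and N U s :: "nat \<Rightarrow> nat" and M :: real
  assumes "\<forall>i\<in>{1..L}. N i \<ge> K * U i"
    and "\<forall>i\<in>{1..L}. \<forall>j\<in>{1..L}. i \<noteq> j \<and> real (U i) / real (N i) \<ge> real (U j) / real (N j)
           \<longrightarrow> real (U i) / real (N i) \<ge> 6400 * (real (U j) / real (N j))"
    and "b \<ge> 1"
    and "1 \<le> t" and "t \<le> K"
    and "\<forall>i\<in>{1..L}. 1 \<le> s i \<and> s i \<le> K div (2 * t)"
    and "M \<ge> 0"
  shows "opt_rate K L N U M \<ge>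
           (\<Sum>i=1..L. min (real (s i * t * U i)) (real (N i) / real (s i * b)))
           - real t / real b * M"
proof -
  note Nge = assms(1) and b1 = assms(3) and t1 = assms(4) and tK = assms(5)
    and srng = assms(6) and M0 = assms(7)
  define Tg where "Tg = (\<Sum>i=1..L. min (real (s i * t * U i)) (real (N i) / real (s i * b)))"
  have ne: "{R. achievable K L N U R M} \<noteq> {}" using achievable_exists[OF M0] by blast
  have lb: "Tg - real t / real b * M \<le> R" if R: "achievable K L N U R M" for R
  proof (rule field_le_epsilon)
    fix \<delta> :: real assume d: "0 < \<delta>"
    define eps where "eps = 1 / (2 * real (nn K t L s) * real b)"
    have n_pos: "0 < nn K t L s"
      unfolding nn_def using t1 tK srng by (auto intro!: prod_pos simp: div_greater_zero_iff)
    have eps_pos: "0 < eps" unfolding eps_def using n_pos b1 by simp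
    obtain F0 where F0: "\<forall>F\<ge>F0. \<exists>\<phi> \<psi> \<mu>. caching_scheme K L N U F M R \<phi> \<psi> \<mu> eps"
      using R eps_pos unfolding achievable_def by blast
    define C where "C = (real b + real t + real L) / real b"
    define F where "F = max F0 (nat \<lceil>C / \<delta>\<rceil> + 1)"
    have FF0: "F \<ge> F0" unfolding F_def by simp
    have Fpos: "0 < F" unfolding F_def by simp
    have Cpos: "0 \<le> C" unfolding C_def by simp
    have FC: "C / \<delta> \<le> real F"
    proof -
      have h1: "C / \<delta> \<le> of_int \<lceil>C / \<delta>\<rceil>" by (rule le_of_int_ceiling)
      have h2: "of_int \<lceil>C / \<delta>\<rceil> \<le> real (nat \<lceil>C / \<delta>\<rceil>)" by simp
      have "nat \<lceil>C / \<delta>\<rceil> + 1 \<le> F" unfolding F_def by (rule max.cobounded2)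
      then have "nat \<lceil>C / \<delta>\<rceil> \<le> F" by linarith
      then have h3: "real (nat \<lceil>C / \<delta>\<rceil>) \<le> real F" by (rule of_nat_mono)
      show ?thesis using h1 h2 h3 by linarith
    qed
    have CF: "C / real F \<le> \<delta>"
      using FC d Fpos Cpos by (simp add: divide_le_eq mult.commute pos_divide_le_eq)
    obtain \<phi> \<psi> \<mu> where sch: "caching_scheme K L N U F M R \<phi> \<psi> \<mu> eps" using F0 FF0 by blast
    have mb: "real b * Tg \<le> real b * R + real t * M + (real b + real t + real L) / real F"
      unfolding Tg_def
      by (rule main_bound[OF Nge b1 t1 tK srng M0 sch[unfolded eps_def] Fpos])
    have bpos: "0 < real b" using b1 by simp
    have "Tg \<le> R + real t / real b * M + C / real F"
    proof -
      have e: "real b * (R + real t / real b * M + C / real F) = real b * R + real t * M + (real b + real t + real L) / real F"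
        using bpos Fpos unfolding C_def by (simp add: field_simps)
      have "real b * Tg \<le> real b * (R + real t / real b * M + C / real F)"
        using mb unfolding e .
      then show ?thesis using bpos by simp
    qed
    then show "Tg - real t / real b * M \<le> R + \<delta>" using CF by simp
  qed
  show ?thesis unfolding opt_rate_def Tg_def[symmetric]
    by (rule cInf_greatest[OF ne]) (use lb in blast)
qed


end
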